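(* Let $K$ be a finite set of integers with $\min K\ge 3$ and let $\lambda\ge \max K$ be an integer. There exists $N=N(K,\lambda)$ such that every $(v,K,\lambda)$-PBD with $v\ge N$ points has a spanning Euler tour (i.e., admits a spanning universal cycle of rank two).
   Context: A $(v,K,\lambda)$-PBD is a hypergraph on $v$ vertices (points) whose edges (blocks, possibly repeated) have sizes in $K$, such that every $2$-subset of points is contained in exactly $\lambda$ blocks. A closed walk is a cyclic sequence $v_1,e_1,\dots,v_m,e_m$ of vertices and edges with $\{v_i,v_{i+1}\}\subseteq e_i$ and $v_i\ne v_{i+1}$ for all $i$ (indices modulo $m$). An Euler tour (universal cycle of rank two) is a closed walk in which every block (each member of the block multiset) occurs exactly once among $e_1,\dots,e_m$; it is spanning if every point occurs among $v_1,\dots,v_m$. *)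

theory Defs
  imports Main "HOL-Library.Multiset"
begin

definition is_PBD :: "nat \<Rightarrow> nat set \<Rightarrow> nat \<Rightarrow> nat set multiset \<Rightarrow> bool" where
  "is_PBD v K lam Bs \<longleftrightarrow>
     (\<forall>B\<in>#Bs. B \<subseteq> {..<v} \<and> card B \<in> K) \<and>
     (\<forall>x<v. \<forall>y<v. x \<noteq> y \<longrightarrow> size (filter_mset (\<lambda>B. {x, y} \<subseteq> B) Bs) = lam)"

definition closed_walk :: "'a list \<Rightarrow> 'a set list \<Rightarrow> bool" where
  "closed_walk vs es \<longleftrightarrow> length vs = length es \<and>
     (\<forall>i<length vs. {vs ! i, vs ! ((i + 1) mod length vs)} \<subseteq> es ! i
                     \<and> vs ! i \<noteq> vs ! ((i + 1) mod length vs))"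

definition euler_tour :: "'a set multiset \<Rightarrow> 'a list \<Rightarrow> 'a set list \<Rightarrow> bool" where
  "euler_tour Bs vs es \<longleftrightarrow> closed_walk vs es \<and> mset es = Bs"

definition spanning_euler_tour :: "'a set \<Rightarrow> 'a set multiset \<Rightarrow> 'a list \<Rightarrow> 'a set list \<Rightarrow> bool" where
  "spanning_euler_tour V Bs vs es \<longleftrightarrow> euler_tour Bs vs es \<and> V \<subseteq> set vs"

end

theory Submission
  imports Defs "HOL-Library.Multiset"
begin

theorem hall_thm:
  fixes I :: "'i set" and A :: "'i \<Rightarrow> 'b set"
  assumes "finite I" "\<forall>i\<in>I. finite (A i)"
    "\<forall>J\<subseteq>I. card J \<le> card (\<Union>(A ` J))"
  shows "\<exists>f. inj_on f I \<and> (\<forall>i\<in>I. f i \<in> A i)"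
  using assms
proof (induction "card I" arbitrary: I A rule: less_induct)
  case less
  show ?case
  proof (cases "I = {}")
    case True then show ?thesis by auto
  next
    case ne: False
    show ?thesis
    proof (cases "\<exists>J. J \<subseteq> I \<and> J \<noteq> {} \<and> J \<noteq> I \<and> card (\<Union>(A ` J)) = card J")
      case True
      then obtain J where J: "J \<subseteq> I" "J \<noteq> {}" "J \<noteq> I" "card (\<Union>(A ` J)) = card J" by blast
      have finJ: "finite J" using J(1) less.prems(1) finite_subset by blast
      have cJ: "card J < card I" using J(1,3) less.prems(1) by (meson psubsetI psubset_card_mono)
      have pJ1: "\<forall>i\<in>J. finite (A i)" using less.prems(2) J(1) by blast
      have pJ2: "\<forall>K\<subseteq>J. card K \<le> card (\<Union>(A ` K))" using less.prems(3) J(1) by blast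
      obtain f1 where f1: "inj_on f1 J" "\<forall>i\<in>J. f1 i \<in> A i"
        using less.hyps[OF cJ finJ pJ1 pJ2] by blast
      define U where "U = \<Union>(A ` J)"
      have finU: "finite U" unfolding U_def using finJ less.prems(2) J(1) by auto
      have sub: "f1 ` J \<subseteq> U" using f1 unfolding U_def by auto
      have "card (f1 ` J) = card U" using card_image[OF f1(1)] J(4) unfolding U_def by simp
      hence imgU: "f1 ` J = U" using card_subset_eq[OF finU sub] by simp
      define A' where "A' = (\<lambda>i. A i - U)"
      have cIJ: "card (I - J) < card I" using J(1,2) less.prems(1)
        by (metis Diff_subset card_Diff_subset card_gt_0_iff diff_less finJ finite_subset psubsetI psubset_card_mono subset_Diff_insert subset_empty)
      have hallIJ: "\<forall>K\<subseteq>I - J. card K \<le> card (\<Union>(A' ` K))"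
      proof (intro allI impI)
        fix K assume K: "K \<subseteq> I - J"
        have finK: "finite K" using K less.prems(1) finite_subset by blast
        have disj: "K \<inter> J = {}" using K by auto
        have "card K + card J = card (K \<union> J)" using card_Un_disjoint[OF finK finJ disj] by simp
        also have "\<dots> \<le> card (\<Union>(A ` (K \<union> J)))" using less.prems(3) K J(1)
          by (metis Diff_subset Un_subset_iff dual_order.trans)
        also have "\<Union>(A ` (K \<union> J)) = \<Union>(A' ` K) \<union> U" unfolding A'_def U_def by auto
        also have "card (\<Union>(A' ` K) \<union> U) \<le> card (\<Union>(A' ` K)) + card U" by (rule card_Un_le)
        finally show "card K \<le> card (\<Union>(A' ` K))" using J(4) unfolding U_def by simp
      qed
      obtain f2 where f2: "inj_on f2 (I - J)" "\<forall>i\<in>I - J. f2 i \<in> A' i"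
        using less.hyps[OF cIJ _ _ hallIJ] less.prems(1,2) unfolding A'_def by auto
      define f where "f = (\<lambda>i. if i \<in> J then f1 i else f2 i)"
      have "inj_on f I"
      proof (rule inj_onI)
        fix a b assume ab: "a \<in> I" "b \<in> I" "f a = f b"
        have inU: "\<And>c. c \<in> I \<Longrightarrow> (f c \<in> U) = (c \<in> J)"
          using imgU f2 unfolding f_def A'_def by auto
        have "(a \<in> J) = (b \<in> J)" using inU[OF ab(1)] inU[OF ab(2)] ab(3) by simp
        thus "a = b" using ab f1(1) f2(1) unfolding f_def
          by (metis DiffI inj_onD)
      qed
      moreover have "\<forall>i\<in>I. f i \<in> A i" using f1 f2 unfolding f_def A'_def by auto
      ultimately show ?thesis by blast
    next
      case False
      hence strict: "\<forall>J. J \<subseteq> I \<and> J \<noteq> {} \<and> J \<noteq> I \<longrightarrow> card J < card (\<Union>(A ` J))"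
        using less.prems(3) by (metis le_neq_implies_less)
      obtain i0 where i0: "i0 \<in> I" using ne by blast
      have "card {i0} \<le> card (A i0)" using less.prems(3) i0 by (metis empty_subsetI image_empty image_insert insert_subset cSup_singleton)
      hence "A i0 \<noteq> {}" by auto
      then obtain x where x: "x \<in> A i0" by blast
      define A' where "A' = (\<lambda>i. A i - {x})"
      have c1: "card (I - {i0}) < card I" using i0 less.prems(1) by (meson card_Diff1_less)
      have hall1: "\<forall>K\<subseteq>I - {i0}. card K \<le> card (\<Union>(A' ` K))"
      proof (intro allI impI)
        fix K assume K: "K \<subseteq> I - {i0}"
        show "card K \<le> card (\<Union>(A' ` K))"
        proof (cases "K = {}")
          case True thus ?thesis by simp
        next
          case False
          have finK: "finite K" using K less.prems(1) finite_subset by blast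
          have "K \<noteq> I" using K i0 by auto
          hence lt: "card K < card (\<Union>(A ` K))" using strict K False by auto
          have fin: "finite (\<Union>(A ` K))" using finK K less.prems(2) by auto
          have eq: "\<Union>(A' ` K) = \<Union>(A ` K) - {x}" unfolding A'_def by auto
          have "card (\<Union>(A ` K)) - card {x} \<le> card (\<Union>(A ` K) - {x})"
            by (rule diff_card_le_card_Diff) simp
          hence "card (\<Union>(A ` K)) \<le> card (\<Union>(A ` K) - {x}) + 1" by simp
          thus ?thesis using lt eq by simp
        qed
      qed
      obtain f' where f': "inj_on f' (I - {i0})" "\<forall>i\<in>I - {i0}. f' i \<in> A' i"
        using less.hyps[OF c1 _ _ hall1] less.prems(1,2) unfolding A'_def by auto
      define f where "f = f'(i0 := x)"
      have "inj_on f I"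
        unfolding f_def using f' i0 unfolding A'_def
        by (smt (verit, del_insts) DiffD2 fun_upd_apply inj_on_def insert_Diff insert_iff)
      moreover have "\<forall>i\<in>I. f i \<in> A i" using f' x unfolding f_def A'_def by auto
      ultimately show ?thesis by blast
    qed
  qed
qed

fun chain :: "'a \<Rightarrow> ('a \<times> 'a \<times> 'e) list \<Rightarrow> 'a \<Rightarrow> bool" where
  "chain u [] w = (u = w)"
| "chain u (ed # t) w = (u = fst ed \<and> chain (fst (snd ed)) t w)"

definition norm :: "'a \<times> 'a \<times> 'e \<Rightarrow> 'a set \<times> 'e" where
  "norm ed = ({fst ed, fst (snd ed)}, snd (snd ed))"

definition mdeg :: "('a set \<times> 'e) multiset \<Rightarrow> 'a \<Rightarrow> nat" where
  "mdeg M x = size (filter_mset (\<lambda>se. x \<in> fst se) M)"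

definition onT :: "'a \<Rightarrow> ('a \<times> 'a \<times> 'e) list \<Rightarrow> bool" where
  "onT x t = (\<exists>ed\<in>set t. x = fst ed \<or> x = fst (snd ed))"

lemma mdeg_pos: "mdeg R x > 0 \<longleftrightarrow> (\<exists>se\<in>#R. x \<in> fst se)"
  unfolding mdeg_def by (metis filter_mset_eq_mempty_iff nonempty_has_size)

lemma mdeg_plus: "mdeg (A + B) x = mdeg A x + mdeg B x"
  unfolding mdeg_def by simp

lemma chain_append: "chain u t1 m \<Longrightarrow> chain m t2 w \<Longrightarrow> chain u (t1 @ t2) w"
  by (induction t1 arbitrary: u) auto

lemma chain_split:
  assumes "chain u t w" "onT x t"
  shows "\<exists>t1 t2. t = t1 @ t2 \<and> chain u t1 x \<and> chain x t2 w"
  using assms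
proof (induction t arbitrary: u)
  case Nil thus ?case by (simp add: onT_def)
next
  case (Cons ed t)
  obtain a b e where ed: "ed = (a,b,e)" by (cases ed) auto
  have ua: "u = a" and cb: "chain b t w" using Cons.prems(1) ed by auto
  show ?case
  proof (cases "x = a")
    case True
    show ?thesis using Cons.prems(1) True ua by (intro exI[of _ "[]"] exI[of _ "ed # t"]) auto
  next
    case False
    show ?thesis
    proof (cases "x = b")
      case True
      show ?thesis using ua cb True ed by (intro exI[of _ "[ed]"] exI[of _ t]) auto
    next
      case False
      hence "onT x t" using Cons.prems(2) \<open>x \<noteq> a\<close> ed by (auto simp: onT_def)
      then obtain t1 t2 where "t = t1 @ t2" "chain b t1 x" "chain x t2 w" using Cons.IH cb by blast
      thus ?thesis using ua ed by (intro exI[of _ "ed # t1"] exI[of _ t2]) auto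
    qed
  qed
qed

lemma mdeg_map_norm:
  "mdeg (mset (map norm t)) x = length (filter (\<lambda>ed. x = fst ed \<or> x = fst (snd ed)) t)"
  unfolding mdeg_def norm_def
  by (induction t) auto

lemma chain_parity:
  assumes "chain u t w" "\<forall>ed\<in>set t. fst ed \<noteq> fst (snd ed)"
  shows "even (mdeg (mset (map norm t)) x + (if x = u then 1 else 0) + (if x = w then 1 else 0))"
  using assms
proof (induction t arbitrary: u)
  case Nil thus ?case by (simp add: mdeg_def)
next
  case (Cons ed t)
  obtain a b e where ed: "ed = (a,b,e)" by (cases ed) auto
  have ua: "u = a" and cb: "chain b t w" and ab: "a \<noteq> b" using Cons.prems ed by auto
  have IH: "even (mdeg (mset (map norm t)) x + (if x = b then 1 else 0) + (if x = w then 1 else 0))"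
    using Cons.IH[OF cb] Cons.prems(2) by auto
  have "mdeg (mset (map norm (ed # t))) x = mdeg (mset (map norm t)) x + (if x = a \<or> x = b then 1 else 0)"
    unfolding mdeg_map_norm using ed by simp
  thus ?case using IH ua ab by auto
qed

lemma subset_add:
  assumes "A \<subseteq># B" "a \<in># B - A" shows "add_mset a A \<subseteq># B"
proof -
  have "B = A + (B - A)" using assms(1) by (simp add: subset_mset.add_diff_inverse)
  moreover have "{#a#} \<subseteq># B - A" using assms(2) by simp
  ultimately show ?thesis
    by (metis add_mset_add_single subset_mset.add_left_mono)
qed

lemma card2_edge:
  assumes "card s = 2" "x \<in> s" shows "\<exists>y. y \<noteq> x \<and> s = {x, y}"
proof -
  obtain a b where "a \<noteq> b" "s = {a,b}" using assms(1) by (meson card_2_iff)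
  thus ?thesis using assms(2) by auto
qed

lemma cycle_exists:
  assumes c2: "\<forall>se\<in>#R. card (fst se) = 2" and ev: "\<forall>y. even (mdeg R y)" and pos: "mdeg R x > 0"
  shows "\<exists>c. c \<noteq> [] \<and> chain x c x \<and> mset (map norm c) \<subseteq># R"
proof -
  define P where "P t = ((\<exists>w. chain x t w) \<and> mset (map norm t) \<subseteq># R \<and> t \<noteq> [])" for t
  have goodt: "\<forall>ed\<in>set t. fst ed \<noteq> fst (snd ed)" if "mset (map norm t) \<subseteq># R" for t
  proof
    fix ed assume "ed \<in> set t"
    hence "norm ed \<in># mset (map norm t)" by simp
    hence "norm ed \<in># R" using that by (meson mset_subset_eqD)
    hence "card {fst ed, fst (snd ed)} = 2" using c2 unfolding norm_def by fastforce
    thus "fst ed \<noteq> fst (snd ed)" by (cases "fst ed = fst (snd ed)") auto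
  qed
  obtain se where se: "se \<in># R" "x \<in> fst se" using pos mdeg_pos by metis
  have "card (fst se) = 2" using c2 se(1) by blast
  then obtain y where y: "y \<noteq> x" "fst se = {x,y}" using card2_edge[OF _ se(2)] by metis
  have nse: "norm (x, y, snd se) = se" unfolding norm_def using y by (metis fst_conv prod.collapse snd_conv)
  have "P [(x, y, snd se)]" unfolding P_def using se(1) nse by (auto intro: exI[of _ y])
  moreover have "\<forall>t. P t \<longrightarrow> length t < size R + 1"
  proof (intro allI impI)
    fix t assume "P t"
    hence "size (mset (map norm t)) \<le> size R" unfolding P_def using size_mset_mono by blast
    thus "length t < size R + 1" by simp
  qed
  ultimately obtain t where tP: "P t" and tmax: "\<forall>t'. P t' \<longrightarrow> length t' \<le> length t"
    using ex_has_greatest_nat[of P "[(x, y, snd se)]" length "size R + 1"] by blast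
  obtain w where cw: "chain x t w" and sub: "mset (map norm t) \<subseteq># R" and tne: "t \<noteq> []"
    using tP unfolding P_def by blast
  show ?thesis
  proof (cases "w = x")
    case True thus ?thesis using cw sub tne by blast
  next
    case False
    define T where "T = mset (map norm t)"
    have par: "even (mdeg T w + (if w = x then 1 else 0) + (if w = w then 1 else 0))"
      unfolding T_def using chain_parity[OF cw goodt[OF sub]] by blast
    hence oddT: "odd (mdeg T w)" using False by auto
    have R: "R = T + (R - T)" using sub unfolding T_def by (simp add: subset_mset.add_diff_inverse)
    have "mdeg R w = mdeg T w + mdeg (R - T) w" using mdeg_plus R by metis
    hence "odd (mdeg (R - T) w)" using ev oddT by (metis even_add)
    hence "mdeg (R - T) w > 0" by (metis odd_pos)
    then obtain se2 where se2: "se2 \<in># R - T" "w \<in> fst se2" using mdeg_pos by metis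
    have "se2 \<in># R" using se2(1) by (meson in_diffD)
    hence "card (fst se2) = 2" using c2 by blast
    then obtain y2 where y2: "y2 \<noteq> w" "fst se2 = {w,y2}" using card2_edge[OF _ se2(2)] by metis
    define t' where "t' = t @ [(w, y2, snd se2)]"
    have "chain x t' y2" unfolding t'_def using chain_append[OF cw, of "[(w, y2, snd se2)]" y2] by simp
    moreover have "mset (map norm t') \<subseteq># R"
    proof -
      have "norm (w, y2, snd se2) = se2" unfolding norm_def using y2 by (metis fst_conv prod.collapse snd_conv)
      hence "mset (map norm t') = add_mset se2 T" unfolding t'_def T_def by simp
      thus ?thesis using subset_add[OF sub[folded T_def] se2(1)] by simp
    qed
    ultimately have "P t'" unfolding P_def t'_def by auto
    hence "length t' \<le> length t" using tmax by blast
    thus ?thesis unfolding t'_def by simp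
  qed
qed

theorem euler_mset:
  assumes c2: "\<forall>se\<in>#M. card (fst se) = 2" and ev: "\<forall>y. even (mdeg M y)"
    and conn: "\<forall>S. z \<in> S \<longrightarrow> (\<forall>se\<in>#M. fst se \<inter> S \<noteq> {} \<longrightarrow> fst se \<subseteq> S) \<longrightarrow> (\<forall>se\<in>#M. fst se \<subseteq> S)"
  shows "\<exists>t. chain z t z \<and> mset (map norm t) = M"
proof -
  define P where "P t = (chain z t z \<and> mset (map norm t) \<subseteq># M)" for t
  have "P []" unfolding P_def by simp
  moreover have "\<forall>t. P t \<longrightarrow> length t < size M + 1"
  proof (intro allI impI)
    fix t assume "P t"
    hence "size (mset (map norm t)) \<le> size M" unfolding P_def using size_mset_mono by blast
    thus "length t < size M + 1" by simp
  qed
  ultimately obtain t where tP: "P t" and tmax: "\<forall>t'. P t' \<longrightarrow> length t' \<le> length t"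
    using ex_has_greatest_nat[of P "[]" length "size M + 1"] by blast
  have cz: "chain z t z" and sub: "mset (map norm t) \<subseteq># M" using tP unfolding P_def by auto
  define T where "T = mset (map norm t)"
  define R where "R = M - T"
  have MTR: "M = T + R" unfolding R_def T_def using sub by (simp add: subset_mset.add_diff_inverse)
  show ?thesis
  proof (rule ccontr)
    assume nex: "\<not> ?thesis"
    hence "T \<noteq> M" using cz unfolding T_def by blast
    hence Rne: "R \<noteq> {#}" using MTR by auto
    define S where "S = insert z {x. onT x t}"
    have "\<exists>se\<in>#R. fst se \<inter> S \<noteq> {}"
    proof (rule ccontr)
      assume none: "\<not> ?thesis"
      have closed: "\<forall>se\<in>#M. fst se \<inter> S \<noteq> {} \<longrightarrow> fst se \<subseteq> S"
      proof (intro ballI impI)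
        fix se assume seM: "se \<in># M" and hit: "fst se \<inter> S \<noteq> {}"
        have "se \<in># T \<or> se \<in># R" using seM MTR by (metis union_iff)
        thus "fst se \<subseteq> S"
        proof
          assume "se \<in># T"
          then obtain ed where ed: "ed \<in> set t" "se = norm ed" unfolding T_def by auto
          thus ?thesis unfolding S_def norm_def onT_def by auto
        next
          assume "se \<in># R" thus ?thesis using none hit by blast
        qed
      qed
      obtain se where se: "se \<in># R" using Rne by (meson multiset_nonemptyE)
      have seM: "se \<in># M" using se MTR by (metis union_iff)
      have "fst se \<subseteq> S" using conn closed seM unfolding S_def by blast
      moreover have "fst se \<noteq> {}" using c2 seM by fastforce
      ultimately have "fst se \<inter> S \<noteq> {}" by (simp add: Int_absorb2)
      thus False using none se by blast
    qed
    then obtain se x where se: "se \<in># R" "x \<in> fst se" "x \<in> S" by blast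
    have goodt: "\<forall>ed\<in>set t. fst ed \<noteq> fst (snd ed)"
    proof
      fix ed assume "ed \<in> set t"
      hence "norm ed \<in># mset (map norm t)" by simp
      hence "norm ed \<in># M" using sub by (meson mset_subset_eqD)
      hence "card {fst ed, fst (snd ed)} = 2" using c2 unfolding norm_def by fastforce
      thus "fst ed \<noteq> fst (snd ed)" by (cases "fst ed = fst (snd ed)") auto
    qed
    have evT: "even (mdeg T y)" for y using chain_parity[OF cz goodt, of y] unfolding T_def by auto
    have evR: "\<forall>y. even (mdeg R y)"
    proof
      fix y have "mdeg M y = mdeg T y + mdeg R y" using MTR mdeg_plus by metis
      thus "even (mdeg R y)" using ev evT[of y] by (metis even_add)
    qed
    have c2R: "\<forall>se\<in>#R. card (fst se) = 2" using c2 MTR by auto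
    have posR: "mdeg R x > 0" using se mdeg_pos by metis
    obtain c where c: "c \<noteq> []" "chain x c x" "mset (map norm c) \<subseteq># R"
      using cycle_exists[OF c2R evR posR] by blast
    obtain t1 t2 where tt: "t = t1 @ t2" "chain z t1 x" "chain x t2 z"
    proof (cases "x = z")
      case True thus ?thesis using that[of "[]" t] cz by simp
    next
      case False hence "onT x t" using se(3) unfolding S_def by auto
      thus ?thesis using chain_split[OF cz] that by blast
    qed
    define t' where "t' = t1 @ c @ t2"
    have "chain z t' z" unfolding t'_def using chain_append[OF tt(2) chain_append[OF c(2) tt(3)]] .
    moreover have "mset (map norm t') \<subseteq># M"
    proof -
      have "mset (map norm t') = T + mset (map norm c)" unfolding t'_def T_def tt(1) by simp
      also have "\<dots> \<subseteq># T + R" using c(3) by (simp add: subset_mset.add_left_mono)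
      finally show ?thesis using MTR by simp
    qed
    ultimately have "P t'" unfolding P_def by simp
    hence "length t' \<le> length t" using tmax by blast
    thus False using c(1) unfolding t'_def tt(1) by simp
  qed
qed

lemma dcount:
  assumes "finite S" "finite D"
  shows "(\<Sum>y\<in>S. card {i\<in>D. Q y i}) = (\<Sum>i\<in>D. card {y\<in>S. Q y i})"
proof -
  have "card {i\<in>D. Q y i} = (\<Sum>i\<in>D. if Q y i then 1 else 0)" for y
    using sum.inter_filter[OF assms(2), of "\<lambda>_. 1::nat" "Q y"] by simp
  moreover have "card {y\<in>S. Q y i} = (\<Sum>y\<in>S. if Q y i then 1 else 0)" for i
    using sum.inter_filter[OF assms(1), of "\<lambda>_. 1::nat" "\<lambda>y. Q y i"] by simp
  ultimately show ?thesis using sum.swap by simp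
qed

lemma arith1:
  fixes L k v j m :: int
  assumes "0 \<le> j" "1 \<le> m" "m + j = v" "k \<ge> 1" "L \<ge> k" "L*(v-1) \<le> (k-1)*((m-1) + L*j)"
  shows "v - 1 \<le> k*L*j"
proof -
  have mv: "m = v - j" using assms(3) by simp
  have e: "(k-1)*((m-1) + L*j) = (k-1)*(v-1) + (k-1)*(L-1)*j" unfolding mv by (simp add: algebra_simps)
  have "(L-k+1)*(v-1) = L*(v-1) - (k-1)*(v-1)" by (simp add: algebra_simps)
  also have "\<dots> \<le> (k-1)*(L-1)*j" using assms(6) e by linarith
  finally have h: "(L-k+1)*(v-1) \<le> (k-1)*(L-1)*j" .
  have "1*(v-1) \<le> (L-k+1)*(v-1)" using assms by (intro mult_right_mono) auto
  moreover have "(k-1)*(L-1)*j \<le> k*L*j"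
  proof (intro mult_right_mono)
    show "(k-1)*(L-1) \<le> k*L" using assms by (smt (verit) mult_mono)
  qed (use assms in auto)
  ultimately show ?thesis using h by (metis mult_1 order_trans)
qed

lemma arith2:
  fixes L k v m :: int
  assumes "1 \<le> m" "k \<ge> 1" "L \<ge> 1" "L*(v-1) \<le> (k-1)*((m-1) + L*m)"
  shows "v - 1 \<le> 2*k*m"
proof -
  have "(k-1)*((m-1) + L*m) \<le> (k-1)*(2*L*m)"
  proof (intro mult_left_mono)
    have "1*m \<le> L*m" using assms by (intro mult_right_mono) auto
    thus "m - 1 + L*m \<le> 2*L*m" by simp
  qed (use assms in auto)
  also have "\<dots> = L*(2*(k-1)*m)" by (simp add: algebra_simps)
  finally have "L*(v-1) \<le> L*(2*(k-1)*m)" using assms(4) by linarith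
  hence "v - 1 \<le> 2*(k-1)*m" using assms(3) by (simp add: mult_le_cancel_left)
  also have "\<dots> \<le> 2*k*m" using assms by (simp add: mult_right_mono)
  finally show ?thesis .
qed

lemma arith3:
  fixes L k v j m :: int
  assumes "k \<ge> 3" "v \<ge> 4*k^4 + 3" "v - 1 \<le> k*L*j" "v - 1 \<le> 2*k*m" "L*m*j \<le> k^2*(2*v)"
    "0 \<le> j" "0 \<le> m" "0 \<le> L"
  shows False
proof -
  have "k^4 \<ge> 0" by simp
  hence v1: "v - 1 \<ge> 0" using assms(2) by linarith
  have "(v-1)*(v-1) \<le> (k*L*j)*(2*k*m)"
    using assms v1 by (intro mult_mono) auto
  also have "\<dots> = 2*k^2*(L*m*j)" by (simp add: algebra_simps power2_eq_square)
  also have "\<dots> \<le> 2*k^2*(k^2*(2*v))" using assms by (intro mult_left_mono) auto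
  also have "\<dots> = 4*k^4*v" by (simp add: algebra_simps power2_eq_square power4_eq_xxxx)
  finally have a: "(v-1)*(v-1) \<le> 4*k^4*v" .
  have "(v-1)*(4*k^4+2) \<le> (v-1)*(v-1)" using v1 assms by (intro mult_left_mono) auto
  hence "4*k^4*v + 2*v - 4*k^4 - 2 \<le> 4*k^4*v" using a by (simp add: algebra_simps)
  moreover have "k^4 \<ge> 0" by simp
  ultimately show False using assms(2) by linarith
qed


locale ctx =
  fixes v :: nat and kk :: nat and lam :: nat and bl :: "nat set list"
  assumes k3: "kk \<ge> 3" and lamk: "lam \<ge> kk"
    and blk: "\<And>i. i < length bl \<Longrightarrow> bl!i \<subseteq> {..<v} \<and> 3 \<le> card (bl!i) \<and> card (bl!i) \<le> kk"
    and pair: "\<And>x y. x < v \<Longrightarrow> y < v \<Longrightarrow> x \<noteq> y \<Longrightarrow> card {i. i < length bl \<and> {x,y} \<subseteq> bl!i} = lam"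
    and vbig: "v \<ge> 4*kk^4 + 3"
begin

definition "II = {..<length bl}"
definition "P x y = {i\<in>II. {x,y} \<subseteq> bl!i}"
definition "D x = {i\<in>II. x \<in> bl!i}"
definition "V = {..<v}"

lemma finII: "finite II" unfolding II_def by simp
lemma finbl: "i \<in> II \<Longrightarrow> finite (bl!i)" unfolding II_def using blk finite_subset by blast
lemma blV: "i \<in> II \<Longrightarrow> bl!i \<subseteq> V" unfolding II_def V_def using blk by blast
lemma blcard: "i \<in> II \<Longrightarrow> 3 \<le> card (bl!i) \<and> card (bl!i) \<le> kk" unfolding II_def using blk by blast

lemma cardP: "x \<in> V \<Longrightarrow> y \<in> V \<Longrightarrow> x \<noteq> y \<Longrightarrow> card (P x y) = lam"
  unfolding P_def II_def V_def using pair by simp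

lemma P_D: "P x y = {i \<in> D x. y \<in> bl!i}" unfolding P_def D_def by auto

lemma r_bound:
  assumes "x \<in> V" shows "lam * (v - 1) \<le> (kk - 1) * card (D x)"
proof -
  have finV: "finite (V - {x})" unfolding V_def by simp
  have finD: "finite (D x)" unfolding D_def using finII by simp
  have "(\<Sum>y\<in>V - {x}. card (P x y)) = (\<Sum>y\<in>V - {x}. lam)"
    using cardP assms by (intro sum.cong) auto
  also have "\<dots> = lam * (v - 1)" using assms unfolding V_def by simp
  finally have e1: "(\<Sum>y\<in>V - {x}. card (P x y)) = lam * (v - 1)" .
  have "(\<Sum>y\<in>V - {x}. card (P x y)) = (\<Sum>i\<in>D x. card {y\<in>V - {x}. y \<in> bl!i})"
    unfolding P_D using dcount[OF finV finD] by simp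
  also have "\<dots> \<le> (\<Sum>i\<in>D x. kk - 1)"
  proof (rule sum_mono)
    fix i assume i: "i \<in> D x"
    hence iI: "i \<in> II" and xi: "x \<in> bl!i" unfolding D_def by auto
    have "{y\<in>V - {x}. y \<in> bl!i} = bl!i - {x}" using blV[OF iI] by auto
    moreover have "card (bl!i - {x}) = card (bl!i) - 1" using xi finbl[OF iI] by simp
    ultimately show "card {y\<in>V - {x}. y \<in> bl!i} \<le> kk - 1" using blcard[OF iI] diff_le_mono by simp
  qed
  also have "\<dots> = (kk - 1) * card (D x)" by simp
  finally show ?thesis using e1 by simp
qed

lemma inside_bound:
  assumes "y \<in> S" "S \<subseteq> V"
  shows "card {i\<in>D y. bl!i \<subseteq> S} \<le> lam * (card S - 1)"
proof -
  have finS: "finite S" using assms(2) unfolding V_def using finite_subset by blast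
  have sub: "{i\<in>D y. bl!i \<subseteq> S} \<subseteq> (\<Union>y'\<in>S - {y}. P y y')"
  proof
    fix i assume i: "i \<in> {i\<in>D y. bl!i \<subseteq> S}"
    hence iI: "i \<in> II" and yi: "y \<in> bl!i" and bS: "bl!i \<subseteq> S" unfolding D_def by auto
    have "card (bl!i) \<ge> 3" using blcard[OF iI] by simp
    hence "card (bl!i - {y}) > 0" by (simp add: card_Diff_singleton_if)
    hence "bl!i - {y} \<noteq> {}" by (metis card.empty less_irrefl)
    then obtain y' where "y' \<in> bl!i" "y' \<noteq> y" by blast
    thus "i \<in> (\<Union>y'\<in>S - {y}. P y y')" using bS yi iI unfolding P_def by auto
  qed
  have "card {i\<in>D y. bl!i \<subseteq> S} \<le> card (\<Union>y'\<in>S - {y}. P y y')"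
    using sub by (intro card_mono) (auto simp: P_def intro: finite_subset[OF _ finII])
  also have "\<dots> \<le> (\<Sum>y'\<in>S - {y}. card (P y y'))" by (rule card_UN_le) (use finS in simp)
  also have "\<dots> = (\<Sum>y'\<in>S - {y}. lam)" using cardP assms by (intro sum.cong) auto
  also have "\<dots> = lam * (card S - 1)" using assms finS by simp
  finally show ?thesis .
qed

lemma star_sdr:
  obtains phi where "inj_on phi (V - {0})" "\<forall>y\<in>V - {0}. phi y \<in> P 0 y"
proof -
  have hall: "\<forall>J\<subseteq>V - {0}. card J \<le> card (\<Union>(P 0 ` J))"
  proof (intro allI impI)
    fix Y assume Y: "Y \<subseteq> V - {0}"
    have finY: "finite Y" using Y unfolding V_def using finite_subset by blast
    define U where "U = \<Union>(P 0 ` Y)"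
    have finU: "finite U" unfolding U_def P_def using finY finII by auto
    have "(\<Sum>y\<in>Y. card (P 0 y)) = (\<Sum>y\<in>Y. lam)"
      using cardP Y unfolding V_def by (intro sum.cong) auto
    hence "lam * card Y = (\<Sum>y\<in>Y. card (P 0 y))" by simp
    also have "\<dots> = (\<Sum>y\<in>Y. card {i\<in>U. {0,y} \<subseteq> bl!i})"
    proof (intro sum.cong refl)
      fix y assume "y \<in> Y"
      hence "P 0 y = {i\<in>U. {0,y} \<subseteq> bl!i}" unfolding U_def P_def by auto
      thus "card (P 0 y) = card {i\<in>U. {0,y} \<subseteq> bl!i}" by simp
    qed
    also have "\<dots> = (\<Sum>i\<in>U. card {y\<in>Y. {0,y} \<subseteq> bl!i})" by (rule dcount[OF finY finU])
    also have "\<dots> \<le> (\<Sum>i\<in>U. kk - 1)"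
    proof (rule sum_mono)
      fix i assume "i \<in> U"
      hence iI: "i \<in> II" and zi: "0 \<in> bl!i" unfolding U_def P_def by auto
      have "{y\<in>Y. {0,y} \<subseteq> bl!i} \<subseteq> bl!i - {0}" using Y by auto
      hence "card {y\<in>Y. {0,y} \<subseteq> bl!i} \<le> card (bl!i - {0})"
        using finbl[OF iI] by (intro card_mono) auto
      also have "\<dots> = card (bl!i) - 1" using zi finbl[OF iI] by simp
      finally show "card {y\<in>Y. {0,y} \<subseteq> bl!i} \<le> kk - 1" using blcard[OF iI] diff_le_mono le_trans by blast
    qed
    also have "\<dots> = (kk - 1) * card U" by simp
    finally have "lam * card Y \<le> (kk - 1) * card U" .
    moreover have "(kk - 1) * card Y \<le> lam * card Y" using lamk by (intro mult_right_mono) auto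
    ultimately have "(kk - 1) * card Y \<le> (kk - 1) * card U" by linarith
    thus "card Y \<le> card (\<Union>(P 0 ` Y))" using k3 unfolding U_def by simp
  qed
  have "finite (V - {0})" unfolding V_def by simp
  moreover have "\<forall>y\<in>V - {0}. finite (P 0 y)" unfolding P_def using finII by simp
  ultimately obtain f where "inj_on f (V - {0})" "\<forall>y\<in>V - {0}. f y \<in> P 0 y"
    using hall_thm[of "V - {0}" "P 0"] hall by blast
  thus ?thesis using that by blast
qed

lemma cross_exists:
  assumes A: "0 \<in> A" "A \<subseteq> V" "A \<noteq> V"
    and U: "U \<subseteq> II" "card U + 1 \<le> card A"
    and Ph: "Phi \<subseteq> II" "card Phi \<le> v - 1" "\<forall>y\<in>V. y \<noteq> 0 \<longrightarrow> Phi \<inter> D y \<subseteq> P 0 y"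
  shows "\<exists>i\<in>II - (U \<union> Phi). bl!i \<inter> A \<noteq> {} \<and> bl!i - A \<noteq> {}"
proof -
  have finV: "finite V" unfolding V_def by simp
  have finA: "finite A" using A(2) finV finite_subset by blast
  have v2: "v \<ge> 2" using vbig by simp
  have v0: "0 \<in> V" using v2 unfolding V_def by simp
  define m where "m = card A"
  define j where "j = card (V - A)"
  have mj: "m + j = v" unfolding m_def j_def V_def using A(2) finA
    by (metis V_def card_Diff_subset card_lessThan finite_lessThan le_add_diff_inverse card_mono)
  have j1: "j \<ge> 1" unfolding j_def using A(2,3) finV
    by (metis Diff_eq_empty_iff card_0_eq finite_Diff less_one not_le subset_antisym)
  have m1: "m \<ge> 1" unfolding m_def using A(1) finA by (metis card_0_eq empty_iff less_one not_le)
  have finU: "finite U" using U(1) finII finite_subset by blast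
  have finPh: "finite Phi" using Ph(1) finII finite_subset by blast
  show ?thesis
  proof (cases "m = 1")
    case True
    hence "card U = 0" using U(2) unfolding m_def by simp
    hence U0: "U = {}" using finU by simp
    have Aeq: "A = {0}" using True A(1) finA unfolding m_def by (metis card_1_singletonE singletonD)
    have r: "lam * (v - 1) \<le> (kk - 1) * card (D 0)" using r_bound[OF v0] .
    have "card (D 0) > v - 1"
    proof (rule ccontr)
      assume "\<not> ?thesis"
      hence "(kk - 1) * card (D 0) \<le> (kk - 1) * (v - 1)" by simp
      moreover have "(kk - 1) * (v - 1) < kk * (v - 1)" using v2 k3 by simp
      moreover have "kk * (v - 1) \<le> lam * (v - 1)" using lamk by simp
      ultimately show False using r by linarith
    qed
    hence "card Phi < card (D 0)" using Ph(2) by simp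
    hence "\<not> D 0 \<subseteq> Phi" using finPh by (meson card_mono not_le)
    then obtain i where i: "i \<in> D 0" "i \<notin> Phi" by blast
    hence iI: "i \<in> II" and zi: "0 \<in> bl!i" unfolding D_def by auto
    have "card (bl!i - {0}) > 0" using blcard[OF iI] zi finbl[OF iI] by simp
    hence "bl!i - {0} \<noteq> {}" by (metis card.empty less_irrefl)
    thus ?thesis using i iI zi U0 Aeq by blast
  next
    case False
    hence m2: "m \<ge> 2" using m1 by simp
    show ?thesis
    proof (rule ccontr)
      assume "\<not> ?thesis"
      hence H: "\<forall>i\<in>II - (U \<union> Phi). bl!i \<inter> A = {} \<or> bl!i \<subseteq> A" by blast
      obtain y where y: "y \<in> V - A" using A(2,3) by blast
      have y0: "y \<noteq> 0" using y A(1) by (metis DiffD2)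
      have subDy: "D y \<subseteq> U \<union> P 0 y \<union> {i\<in>D y. bl!i \<subseteq> V - A}"
      proof
        fix i assume i: "i \<in> D y"
        hence iI: "i \<in> II" and yi: "y \<in> bl!i" unfolding D_def by auto
        show "i \<in> U \<union> P 0 y \<union> {i\<in>D y. bl!i \<subseteq> V - A}"
        proof (cases "i \<in> U \<union> Phi")
          case True thus ?thesis using Ph(3) y y0 i by blast
        next
          case False
          hence "bl!i \<inter> A = {}" using H iI yi y by blast
          thus ?thesis using blV[OF iI] i by blast
        qed
      qed
      have cDy: "card (D y) \<le> (m - 1) + lam * j"
      proof -
        have "card (D y) \<le> card (U \<union> P 0 y \<union> {i\<in>D y. bl!i \<subseteq> V - A})"
          using subDy by (intro card_mono) (auto simp: P_def D_def intro: finite_subset[OF _ finII] finU)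
        also have "\<dots> \<le> card U + card (P 0 y) + card {i\<in>D y. bl!i \<subseteq> V - A}"
          by (meson add_le_mono card_Un_le le_refl order_trans)
        also have "\<dots> \<le> (m - 1) + lam + lam * (j - 1)"
          using U(2) cardP[OF v0 _ y0[symmetric]] y inside_bound[of y "V - A"] unfolding m_def j_def
          by (intro add_le_mono) auto
        also have "\<dots> = (m - 1) + lam * j" using j1 by (cases j) auto
        finally show ?thesis .
      qed
      have "card (A - {0}) \<ge> 1" using m2 A(1) finA unfolding m_def by simp
      hence "A - {0} \<noteq> {}" by (metis card.empty not_one_le_zero)
      then obtain a where a: "a \<in> A" "a \<noteq> 0" by blast
      have aV: "a \<in> V" using a A(2) by blast
      have subDa: "D a \<subseteq> U \<union> P 0 a \<union> {i\<in>D a. bl!i \<subseteq> A}"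
      proof
        fix i assume i: "i \<in> D a"
        hence iI: "i \<in> II" and ai: "a \<in> bl!i" unfolding D_def by auto
        show "i \<in> U \<union> P 0 a \<union> {i\<in>D a. bl!i \<subseteq> A}"
        proof (cases "i \<in> U \<union> Phi")
          case True thus ?thesis using Ph(3) aV a i by blast
        next
          case False
          hence "bl!i \<subseteq> A" using H iI ai a by blast
          thus ?thesis using i by blast
        qed
      qed
      have cDa: "card (D a) \<le> (m - 1) + lam * m"
      proof -
        have "card (D a) \<le> card (U \<union> P 0 a \<union> {i\<in>D a. bl!i \<subseteq> A})"
          using subDa by (intro card_mono) (auto simp: P_def D_def intro: finite_subset[OF _ finII] finU)
        also have "\<dots> \<le> card U + card (P 0 a) + card {i\<in>D a. bl!i \<subseteq> A}"
          by (meson add_le_mono card_Un_le le_refl order_trans)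
        also have "\<dots> \<le> (m - 1) + lam + lam * (m - 1)"
          using U(2) cardP[OF v0 aV a(2)[symmetric]] a inside_bound[of a A] A(2) unfolding m_def
          by (intro add_le_mono) auto
        also have "\<dots> = (m - 1) + lam * m" using m1 by (cases m) auto
        finally show ?thesis .
      qed
      define T where "T = Sigma A (\<lambda>x. Sigma (V - A) (\<lambda>y. P x y))"
      have finP: "finite (P x y)" for x y unfolding P_def using finII by simp
      have cT: "card T = (\<Sum>x\<in>A. \<Sum>y\<in>V - A. card (P x y))"
        unfolding T_def using finA finV finP by (simp add: card_SigmaI)
      also have "\<dots> = (\<Sum>x\<in>A. \<Sum>y\<in>V - A. lam)"
        using cardP A(2) by (intro sum.cong refl) auto
      also have "\<dots> = m * (j * lam)" unfolding m_def j_def by simp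
      finally have cT': "card T = m * (j * lam)" .
      have Tsub: "T \<subseteq> (\<Union>i\<in>U \<union> Phi. (bl!i \<times> bl!i \<times> {i}))"
      proof
        fix t assume "t \<in> T"
        then obtain x y i where t: "t = (x,y,i)" "x \<in> A" "y \<in> V - A" "i \<in> P x y" unfolding T_def by blast
        hence iI: "i \<in> II" and xy: "x \<in> bl!i" "y \<in> bl!i" unfolding P_def by auto
        have "i \<in> U \<union> Phi" using H iI xy t(2,3) by blast
        thus "t \<in> (\<Union>i\<in>U \<union> Phi. (bl!i \<times> bl!i \<times> {i}))" using t xy by blast
      qed
      have "card T \<le> card (\<Union>i\<in>U \<union> Phi. (bl!i \<times> bl!i \<times> {i}))"
        using Tsub finU finPh Ph(1) U(1) finbl by (intro card_mono) auto
      also have "\<dots> \<le> (\<Sum>i\<in>U \<union> Phi. card (bl!i \<times> bl!i \<times> {i}))"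
        by (rule card_UN_le) (use finU finPh in simp)
      also have "\<dots> \<le> (\<Sum>i\<in>U \<union> Phi. kk * kk)"
      proof (rule sum_mono)
        fix i assume "i \<in> U \<union> Phi"
        hence iI: "i \<in> II" using U(1) Ph(1) by blast
        have "card (bl!i \<times> bl!i \<times> {i}) = card (bl!i) * card (bl!i)" by (simp add: card_cartesian_product)
        thus "card (bl!i \<times> bl!i \<times> {i}) \<le> kk * kk" using blcard[OF iI] by (simp add: mult_le_mono)
      qed
      also have "\<dots> = card (U \<union> Phi) * (kk * kk)" by simp
      also have "\<dots> \<le> (card U + card Phi) * (kk * kk)" by (simp add: card_Un_le)
      also have "\<dots> \<le> (2 * v) * (kk * kk)"
      proof -
        have "card U + card Phi \<le> 2 * v" using U(2) Ph(2) mj m_def by linarith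
        thus ?thesis by (intro mult_right_mono) auto
      qed
      finally have c3: "m * (j * lam) \<le> (2 * v) * (kk * kk)" using cT' by simp
      have ra: "lam * (v - 1) \<le> (kk - 1) * ((m - 1) + lam * m)"
        using r_bound[OF aV] mult_le_mono2[OF cDa, of "kk-1"] by (rule le_trans)
      have yV: "y \<in> V" using y by blast
      have ry: "lam * (v - 1) \<le> (kk - 1) * ((m - 1) + lam * j)"
        using r_bound[OF yV] mult_le_mono2[OF cDy, of "kk-1"] by (rule le_trans)
      have cv1: "int (lam * (v - 1)) = int lam * (int v - 1)" using v2 by (simp add: of_nat_diff)
      have cr1: "int ((kk - 1) * ((m - 1) + lam * j)) = (int kk - 1) * ((int m - 1) + int lam * int j)"
        using k3 m1 by (simp add: of_nat_diff)
      have cr2: "int ((kk - 1) * ((m - 1) + lam * m)) = (int kk - 1) * ((int m - 1) + int lam * int m)"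
        using k3 m1 by (simp add: of_nat_diff)
      have i1: "int lam * (int v - 1) \<le> (int kk - 1) * ((int m - 1) + int lam * int j)"
        using ry cv1 cr1 by (metis of_nat_le_iff)
      have i2: "int lam * (int v - 1) \<le> (int kk - 1) * ((int m - 1) + int lam * int m)"
        using ra cv1 cr2 by (metis of_nat_le_iff)
      have mjI: "int m + int j = int v" using mj by simp
      have b1: "int v - 1 \<le> int kk * int lam * int j"
        using arith1[OF _ _ mjI _ _ i1] m1 k3 lamk by simp
      have b2: "int v - 1 \<le> 2 * int kk * int m"
        using arith2[OF _ _ _ i2] m1 k3 lamk by simp
      have c3I: "int lam * int m * int j \<le> (int kk)^2 * (2 * int v)"
      proof -
        have "int (m * (j * lam)) \<le> int ((2 * v) * (kk * kk))" using c3 of_nat_le_iff by blast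
        thus ?thesis by (simp add: algebra_simps power2_eq_square)
      qed
      have "int (4*kk^4+3) \<le> int v" using vbig of_nat_le_iff by blast
      moreover have "int (4*kk^4+3) = 4 * (int kk)^4 + 3" by simp
      ultimately have vI: "int v \<ge> 4 * (int kk)^4 + 3" by linarith
      show False using arith3[OF _ vI b1 b2 c3I] k3 by simp
    qed
  qed
qed

end

context ctx begin

fun valid :: "nat set \<Rightarrow> (nat \<times> nat \<times> nat \<times> nat) list \<Rightarrow> bool" where
  "valid A [] = True"
| "valid A ((i,y,p,c) # st) = (i \<in> II \<and> y \<in> V \<and> y \<notin> A \<and> p \<in> A \<and> y \<in> bl!i \<and> p \<in> bl!i \<and> c \<in> bl!i
      \<and> c \<noteq> y \<and> c \<noteq> p \<and> valid (insert y A) st)"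

lemma growth:
  assumes Ph: "Phi \<subseteq> II" "card Phi \<le> v - 1" "\<forall>y\<in>V. y \<noteq> 0 \<longrightarrow> Phi \<inter> D y \<subseteq> P 0 y"
  shows "0 \<in> A \<Longrightarrow> A \<subseteq> V \<Longrightarrow> U \<subseteq> II \<Longrightarrow> card U + 1 \<le> card A \<Longrightarrow>
    \<exists>st. valid A st \<and> (\<forall>q\<in>set st. fst q \<notin> U \<union> Phi) \<and> distinct (map fst st) \<and> A \<union> (fst \<circ> snd) ` set st = V"
proof (induction "card V - card A" arbitrary: A U rule: less_induct)
  case less
  have finV: "finite V" unfolding V_def by simp
  have finA: "finite A" using less.prems(2) finV finite_subset by blast
  have finU: "finite U" using less.prems(3) finII finite_subset by blast
  show ?case
  proof (cases "A = V")
    case True thus ?thesis by (intro exI[of _ "[]"]) auto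
  next
    case False
    obtain i where i: "i \<in> II - (U \<union> Phi)" "bl!i \<inter> A \<noteq> {}" "bl!i - A \<noteq> {}"
      using cross_exists[OF less.prems(1,2) False less.prems(3,4) Ph] by blast
    have iI: "i \<in> II" using i by blast
    obtain p where p: "p \<in> bl!i" "p \<in> A" using i(2) by blast
    obtain y where y: "y \<in> bl!i" "y \<notin> A" using i(3) by blast
    have yV: "y \<in> V" using y blV[OF iI] by blast
    have "card (bl!i - {y,p}) > 0"
    proof -
      have "card (bl!i - {y,p}) \<ge> card (bl!i) - card {y,p}" by (rule diff_card_le_card_Diff) simp
      moreover have "card {y,p} \<le> 2" by (simp add: card_insert_le_m1)
      ultimately show ?thesis using blcard[OF iI] by linarith
    qed
    then obtain c where c: "c \<in> bl!i" "c \<noteq> y" "c \<noteq> p" by (metis DiffE card.empty insertCI less_irrefl subsetI subset_empty)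
    define A' where "A' = insert y A"
    define U' where "U' = insert i U"
    have lt: "card V - card A' < card V - card A"
    proof -
      have "card A' = card A + 1" unfolding A'_def using y finA by simp
      moreover have "card A' \<le> card V" unfolding A'_def using yV less.prems(2) finV by (intro card_mono) auto
      ultimately show ?thesis by linarith
    qed
    have "card U' + 1 \<le> card A'" unfolding U'_def A'_def using i finU y finA less.prems(4) by simp
    moreover have "0 \<in> A'" "A' \<subseteq> V" "U' \<subseteq> II" unfolding A'_def U'_def using less.prems yV iI by auto
    ultimately obtain st where st: "valid A' st" "\<forall>q\<in>set st. fst q \<notin> U' \<union> Phi"
        "distinct (map fst st)" "A' \<union> (fst \<circ> snd) ` set st = V"
      using less.hyps[OF lt] by blast
    show ?thesis
    proof (intro exI[of _ "(i,y,p,c) # st"] conjI)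
      show "valid A ((i,y,p,c) # st)" using st(1) iI yV y p c unfolding A'_def by simp
      show "\<forall>q\<in>set ((i,y,p,c) # st). fst q \<notin> U \<union> Phi" using st(2) i unfolding U'_def by auto
      show "distinct (map fst ((i,y,p,c) # st))" using st(2,3) unfolding U'_def by auto
      show "A \<union> (fst \<circ> snd) ` set ((i,y,p,c) # st) = V" using st(4) unfolding A'_def by auto
    qed
  qed
qed

lemma valid_notin: "valid A st \<Longrightarrow> q \<in> set st \<Longrightarrow> fst (snd q) \<notin> A"
proof (induction A st rule: valid.induct)
  case (2 A i y p c st) thus ?case by auto
qed simp

lemma valid_distinct3: "valid A st \<Longrightarrow> q \<in> set st \<Longrightarrow>
   fst (snd q) \<noteq> fst (snd (snd q)) \<and> snd (snd (snd q)) \<noteq> fst (snd q) \<and> snd (snd (snd q)) \<noteq> fst (snd (snd q))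
   \<and> fst q \<in> II \<and> {fst (snd q), fst (snd (snd q)), snd (snd (snd q))} \<subseteq> bl!(fst q)"
proof (induction A st rule: valid.induct)
  case (2 A i y p c st) thus ?case by auto
qed simp

definition tog :: "(nat \<times> nat \<times> nat \<times> nat) set \<Rightarrow> nat \<Rightarrow> nat" where
  "tog J x = card {q\<in>J. x = fst (snd q) \<or> x = fst (snd (snd q))}"

lemma tjoin:
  "valid A st \<Longrightarrow> E \<subseteq> A \<union> (fst \<circ> snd) ` set st \<Longrightarrow>
    \<exists>J\<subseteq>set st. \<exists>EA\<subseteq>A. \<forall>x. (x \<in> E) = ((x \<in> EA) \<noteq> odd (tog J x))"
proof (induction st arbitrary: A E)
  case Nil thus ?case by (intro exI[of _ "{}"] exI[of _ E]) (auto simp: tog_def)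
next
  case (Cons q st)
  obtain i y p c where q: "q = (i,y,p,c)" by (cases q) auto
  have v': "valid (insert y A) st" and yA: "y \<notin> A" and pA: "p \<in> A" using Cons.prems(1) q by auto
  have Esub: "E \<subseteq> insert y A \<union> (fst \<circ> snd) ` set st" using Cons.prems(2) q by auto
  obtain J' EA' where J': "J' \<subseteq> set st" "EA' \<subseteq> insert y A" "\<forall>x. (x \<in> E) = ((x \<in> EA') \<noteq> odd (tog J' x))"
    using Cons.IH[OF v' Esub] by blast
  have qn: "q \<notin> set st"
  proof
    assume "q \<in> set st"
    hence "fst (snd q) \<notin> insert y A" using valid_notin[OF v'] by blast
    thus False using q by simp
  qed
  have finJ': "finite J'" using J'(1) finite_subset by blast
  show ?case
  proof (cases "y \<in> EA'")
    case False
    thus ?thesis using J' by (intro exI[of _ J'] exI[of _ EA']) auto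
  next
    case True
    define J where "J = insert q J'"
    define EA where "EA = (if p \<in> EA' then EA' - {y,p} else insert p (EA' - {y}))"
    have qJ': "q \<notin> J'" using qn J'(1) by blast
    have togJ: "tog J x = tog J' x + (if x = y \<or> x = p then 1 else 0)" for x
    proof -
      have "{r\<in>J. x = fst (snd r) \<or> x = fst (snd (snd r))} =
         (if x = y \<or> x = p then insert q {r\<in>J'. x = fst (snd r) \<or> x = fst (snd (snd r))}
          else {r\<in>J'. x = fst (snd r) \<or> x = fst (snd (snd r))})" unfolding J_def q by auto
      thus ?thesis unfolding tog_def using qJ' finJ' by auto
    qed
    have "\<forall>x. (x \<in> E) = ((x \<in> EA) \<noteq> odd (tog J x))"
    proof
      fix x
      have yp: "y \<noteq> p" using yA pA by blast
      show "(x \<in> E) = ((x \<in> EA) \<noteq> odd (tog J x))"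
        using J'(3)[rule_format, of x] True yp unfolding togJ EA_def by (cases "x = y"; cases "x = p") auto
    qed
    moreover have "J \<subseteq> set (q # st)" using J'(1) unfolding J_def by auto
    moreover have "EA \<subseteq> A" using J'(2) pA unfolding EA_def by auto
    ultimately show ?thesis by blast
  qed
qed

end

lemma chain_next: "chain u t w \<Longrightarrow> i < length t \<Longrightarrow>
   fst (snd (t!i)) = (if Suc i < length t then fst (t!Suc i) else w)"
proof (induction t arbitrary: u i)
  case Nil thus ?case by simp
next
  case (Cons ed t)
  show ?case
  proof (cases i)
    case 0 thus ?thesis using Cons.prems by (cases t) auto
  next
    case (Suc k) thus ?thesis using Cons.prems Cons.IH[of "fst (snd ed)" k] by auto
  qed
qed

lemma chain_hd: "chain u t w \<Longrightarrow> t \<noteq> [] \<Longrightarrow> fst (t!0) = u"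
  by (cases t) auto

lemma chain_cw:
  assumes "chain z t z" "t \<noteq> []" "\<forall>ed\<in>set t. fst ed \<noteq> fst (snd ed) \<and> {fst ed, fst (snd ed)} \<subseteq> snd (snd ed)"
  shows "closed_walk (map fst t) (map (snd \<circ> snd) t)"
  unfolding closed_walk_def
proof (intro conjI allI impI)
  show "length (map fst t) = length (map (snd \<circ> snd) t)" by simp
  fix i assume i: "i < length (map fst t)"
  hence i': "i < length t" by simp
  have nx: "map fst t ! ((i + 1) mod length (map fst t)) = fst (snd (t!i))"
  proof (cases "Suc i < length t")
    case True thus ?thesis using chain_next[OF assms(1) i'] by simp
  next
    case False hence "Suc i = length t" using i' by simp
    moreover have "map fst t ! 0 = fst (t!0)" using assms(2) by simp
    ultimately show ?thesis using chain_next[OF assms(1) i'] chain_hd[OF assms(1,2)] by simp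
  qed
  have ed: "t!i \<in> set t" using i' by simp
  show "{map fst t ! i, map fst t ! ((i + 1) mod length (map fst t))} \<subseteq> map (snd \<circ> snd) t ! i"
    using nx assms(3) ed i' by auto
  show "map fst t ! i \<noteq> map fst t ! ((i + 1) mod length (map fst t))"
    using nx assms(3) ed i' by auto
qed

lemma chain_snd_in: "chain z t z \<Longrightarrow> ed \<in> set t \<Longrightarrow> fst (snd ed) \<in> set (map fst t)"
proof -
  assume c: "chain z t z" and e: "ed \<in> set t"
  then obtain i where i: "i < length t" "ed = t!i" by (metis in_set_conv_nth)
  have tne: "t \<noteq> []" using e by auto
  show ?thesis
  proof (cases "Suc i < length t")
    case True thus ?thesis using chain_next[OF c i(1)] i by (simp add: image_iff) (metis nth_mem)
  next
    case False thus ?thesis using chain_next[OF c i(1)] i chain_hd[OF c tne] tne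
      by (simp add: image_iff) (metis length_greater_0_conv nth_mem)
  qed
qed

context ctx begin

theorem tour: "\<exists>vs es. spanning_euler_tour {..<v} (mset bl) vs es"
proof -
  have v2: "v \<ge> 2" using vbig by simp
  have finV: "finite V" unfolding V_def by simp
  have v0: "0 \<in> V" using v2 unfolding V_def by simp
  obtain phi where phi: "inj_on phi (V - {0})" "\<forall>y\<in>V - {0}. phi y \<in> P 0 y" using star_sdr by blast
  define Phi where "Phi = phi ` (V - {0})"
  have PhII: "Phi \<subseteq> II" unfolding Phi_def using phi(2) unfolding P_def by auto
  have cPh: "card Phi \<le> v - 1" unfolding Phi_def
    using card_image_le[of "V - {0}" phi] finV v0 unfolding V_def by simp
  have PhD: "\<forall>y\<in>V. y \<noteq> 0 \<longrightarrow> Phi \<inter> D y \<subseteq> P 0 y"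
    unfolding Phi_def using phi(2) unfolding P_def D_def by auto
  obtain st where st: "valid {0} st" "\<forall>q\<in>set st. fst q \<notin> {} \<union> Phi" "distinct (map fst st)"
      "{0} \<union> (fst \<circ> snd) ` set st = V"
    using growth[OF PhII cPh PhD, of "{0}" "{}"] v0 by auto
  have dex: "\<exists>s. s \<subseteq> bl!i \<and> card s = 2" if "i \<in> II" for i
    using blcard[OF that] obtain_subset_with_card_n[of 2 "bl!i"] by (metis le_trans numeral_le_iff semiring_norm(72) le_numeral_extra(4) one_le_numeral numeral_One numeral_le_one_iff order.refl Suc_1 numeral_2_eq_2 eval_nat_numeral(3) le_SucI)
  define dflt where "dflt i = (SOME s. s \<subseteq> bl!i \<and> card s = 2)" for i
  have dflt: "dflt i \<subseteq> bl!i \<and> card (dflt i) = 2" if "i \<in> II" for i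
    unfolding dflt_def using someI_ex[OF dex[OF that]] .
  define ends0 where "ends0 i = (if i \<in> Phi then {0, inv_into (V - {0}) phi i}
      else (case map_of st i of Some (y,p,c) \<Rightarrow> {p,c} | None \<Rightarrow> dflt i))" for i
  define D0 where "D0 x = card {i\<in>II. x \<in> ends0 i}" for x
  define E where "E = {x\<in>V. odd (D0 x)}"
  obtain J EA where J: "J \<subseteq> set st" "EA \<subseteq> {0}" "\<forall>x. (x \<in> E) = ((x \<in> EA) \<noteq> odd (tog J x))"
    using tjoin[OF st(1), of E] st(4) unfolding E_def by blast
  define ends1 where "ends1 i = (if i \<in> Phi then {0, inv_into (V - {0}) phi i}
      else (case map_of st i of Some (y,p,c) \<Rightarrow> (if (i,y,p,c) \<in> J then {y,c} else {p,c}) | None \<Rightarrow> dflt i))" for i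
  define F where "F x = card {i\<in>II. x \<in> ends1 i}" for x
  have mapst: "map_of st i = Some (y,p,c) \<longleftrightarrow> (i,y,p,c) \<in> set st" for i y p c
    using st(3) by (metis map_of_SomeD map_of_is_SomeI)
  have tup: "(i,y,p,c) \<in> set st \<Longrightarrow> y \<noteq> p \<and> c \<noteq> y \<and> c \<noteq> p \<and> i \<in> II \<and> {y,p,c} \<subseteq> bl!i \<and> i \<notin> Phi" for i y p c
    using valid_distinct3[OF st(1), of "(i,y,p,c)"] st(2) by auto
  have phinv: "w \<in> V - {0} \<Longrightarrow> inv_into (V - {0}) phi (phi w) = w" for w using phi(1) by simp
  have phiends: "i \<in> Phi \<Longrightarrow> inv_into (V - {0}) phi i \<in> V - {0} \<and> {0, inv_into (V - {0}) phi i} \<subseteq> bl!i" for i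
  proof -
    assume "i \<in> Phi"
    then obtain w where w: "w \<in> V - {0}" "i = phi w" unfolding Phi_def by blast
    thus ?thesis using phinv[OF w(1)] phi(2) unfolding P_def by auto
  qed
  have E1: "ends1 i \<subseteq> bl!i \<and> card (ends1 i) = 2" if iI: "i \<in> II" for i
  proof (cases "i \<in> Phi")
    case True thus ?thesis using phiends[OF True] unfolding ends1_def by auto
  next
    case False
    show ?thesis
    proof (cases "map_of st i")
      case None thus ?thesis using False dflt[OF iI] unfolding ends1_def by simp
    next
      case (Some a)
      then obtain y p c where a: "map_of st i = Some (y,p,c)" by (cases a) auto
      hence "(i,y,p,c) \<in> set st" using mapst by blast
      thus ?thesis using tup[of i y p c] False a unfolding ends1_def by auto
    qed
  qed
  have E0: "ends0 i \<subseteq> bl!i" if iI: "i \<in> II" for i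
  proof (cases "i \<in> Phi")
    case True thus ?thesis using phiends[OF True] unfolding ends0_def by auto
  next
    case False
    show ?thesis
    proof (cases "map_of st i")
      case None thus ?thesis using False dflt[OF iI] unfolding ends0_def by simp
    next
      case (Some a)
      then obtain y p c where a: "map_of st i = Some (y,p,c)" by (cases a) auto
      hence "(i,y,p,c) \<in> set st" using mapst by blast
      thus ?thesis using tup[of i y p c] False a unfolding ends0_def by auto
    qed
  qed
  have Delta: "{i\<in>II. (x \<in> ends1 i) \<noteq> (x \<in> ends0 i)} = fst ` {q\<in>J. x = fst (snd q) \<or> x = fst (snd (snd q))}" for x
  proof
    show "{i\<in>II. (x \<in> ends1 i) \<noteq> (x \<in> ends0 i)} \<subseteq> fst ` {q\<in>J. x = fst (snd q) \<or> x = fst (snd (snd q))}"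
    proof
      fix i assume i: "i \<in> {i\<in>II. (x \<in> ends1 i) \<noteq> (x \<in> ends0 i)}"
      have nP: "i \<notin> Phi" using i unfolding ends1_def ends0_def by auto
      obtain y p c where a: "map_of st i = Some (y,p,c)"
        using i nP unfolding ends1_def ends0_def by (cases "map_of st i") auto
      have inJ: "(i,y,p,c) \<in> J" using i nP a unfolding ends1_def ends0_def by (cases "(i,y,p,c) \<in> J") auto
      have "x = y \<or> x = p" using i nP a inJ unfolding ends1_def ends0_def by auto
      thus "i \<in> fst ` {q\<in>J. x = fst (snd q) \<or> x = fst (snd (snd q))}" using inJ by force
    qed
  next
    show "fst ` {q\<in>J. x = fst (snd q) \<or> x = fst (snd (snd q))} \<subseteq> {i\<in>II. (x \<in> ends1 i) \<noteq> (x \<in> ends0 i)}"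
    proof
      fix i assume "i \<in> fst ` {q\<in>J. x = fst (snd q) \<or> x = fst (snd (snd q))}"
      then obtain y p c where q: "(i,y,p,c) \<in> J" "x = y \<or> x = p" by force
      have ins: "(i,y,p,c) \<in> set st" using q J(1) by blast
      have a: "map_of st i = Some (y,p,c)" using mapst ins by blast
      have t: "y \<noteq> p \<and> c \<noteq> y \<and> c \<noteq> p \<and> i \<in> II \<and> i \<notin> Phi" using tup[OF ins] by blast
      show "i \<in> {i\<in>II. (x \<in> ends1 i) \<noteq> (x \<in> ends0 i)}"
        using q a t unfolding ends1_def ends0_def by auto
    qed
  qed
  have injfst: "inj_on fst J" using st(3) J(1) by (meson distinct_map inj_on_subset)
  have finJ: "finite J" using J(1) finite_subset by blast
  have cDelta: "card {i\<in>II. (x \<in> ends1 i) \<noteq> (x \<in> ends0 i)} = tog J x" for x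
    unfolding Delta tog_def by (rule card_image) (use injfst in \<open>auto intro: inj_on_subset\<close>)
  have parFD: "even (F x + D0 x) = even (tog J x)" for x
  proof -
    have "F x + D0 x = (\<Sum>i\<in>II. (if x \<in> ends1 i then 1 else 0) + (if x \<in> ends0 i then 1 else 0 :: nat))"
      unfolding F_def D0_def using sum.inter_filter[OF finII, of "\<lambda>_. 1::nat"] by (simp add: sum.distrib)
    hence "even (F x + D0 x) = even (\<Sum>i\<in>II. (if x \<in> ends1 i then 1 else 0) + (if x \<in> ends0 i then 1 else 0 :: nat))"
      by simp
    also have "\<dots> = even (card {i\<in>II. odd ((if x \<in> ends1 i then 1 else 0) + (if x \<in> ends0 i then 1 else 0 :: nat))})"
      by (rule even_sum_iff[OF finII])
    also have "{i\<in>II. odd ((if x \<in> ends1 i then 1 else 0) + (if x \<in> ends0 i then 1 else 0 :: nat))}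
        = {i\<in>II. (x \<in> ends1 i) \<noteq> (x \<in> ends0 i)}" by auto
    finally show ?thesis using cDelta by simp
  qed
  have Fev: "even (F x)" if "x \<in> V - {0}" for x
  proof -
    have "x \<notin> EA" using J(2) that by blast
    hence "(x \<in> E) = odd (tog J x)" using J(3) by blast
    hence "odd (D0 x) = odd (tog J x)" using that unfolding E_def by blast
    thus ?thesis using parFD[of x] by auto
  qed
  have sumF: "(\<Sum>x\<in>V. F x) = 2 * card II"
  proof -
    have "(\<Sum>x\<in>V. F x) = (\<Sum>i\<in>II. card {x\<in>V. x \<in> ends1 i})"
      unfolding F_def using dcount[OF finV finII] by simp
    also have "\<dots> = (\<Sum>i\<in>II. 2)"
    proof (intro sum.cong refl)
      fix i assume iI: "i \<in> II"
      have "{x\<in>V. x \<in> ends1 i} = ends1 i" using E1[OF iI] blV[OF iI] by auto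
      thus "card {x\<in>V. x \<in> ends1 i} = 2" using E1[OF iI] by simp
    qed
    finally show ?thesis by simp
  qed
  have Fev0: "even (F 0)"
  proof -
    have "(\<Sum>x\<in>V. F x) = F 0 + (\<Sum>x\<in>V - {0}. F x)" using v0 finV by (simp add: sum.remove)
    moreover have "even (\<Sum>x\<in>V - {0}. F x)" using Fev by (intro dvd_sum) auto
    ultimately show ?thesis using sumF by (metis even_add dvd_triv_left)
  qed
  have FevAll: "even (F x)" for x
  proof (cases "x \<in> V")
    case True thus ?thesis using Fev Fev0 by (cases "x = 0") auto
  next
    case False
    hence "{i\<in>II. x \<in> ends1 i} = {}" using E1 blV by blast
    thus ?thesis unfolding F_def by (metis card.empty even_zero)
  qed
  define M where "M = mset (map (\<lambda>i. (ends1 i, bl!i)) [0..<length bl])"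
  have inM: "se \<in># M \<longleftrightarrow> (\<exists>i\<in>II. se = (ends1 i, bl!i))" for se
    unfolding M_def II_def by auto
  have c2: "\<forall>se\<in>#M. card (fst se) = 2" using inM E1 by auto
  have mdegF: "mdeg M x = F x" for x
  proof -
    have "mdeg M x = length (filter (\<lambda>i. x \<in> ends1 i) [0..<length bl])"
      unfolding mdeg_def M_def by (simp only: mset_filter[symmetric] size_mset filter_map length_map comp_def fst_conv)
    also have "\<dots> = card {i\<in>II. x \<in> ends1 i}"
      unfolding length_filter_conv_card II_def by (intro arg_cong[where f=card]) auto
    finally show ?thesis unfolding F_def .
  qed
  have ev: "\<forall>y. even (mdeg M y)" using mdegF FevAll by simp
  have conn: "\<forall>S. 0 \<in> S \<longrightarrow> (\<forall>se\<in>#M. fst se \<inter> S \<noteq> {} \<longrightarrow> fst se \<subseteq> S) \<longrightarrow> (\<forall>se\<in>#M. fst se \<subseteq> S)"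
  proof (intro allI impI)
    fix S assume S0: "0 \<in> S" and cl: "\<forall>se\<in>#M. fst se \<inter> S \<noteq> {} \<longrightarrow> fst se \<subseteq> S"
    have VS: "V \<subseteq> S"
    proof
      fix w assume w: "w \<in> V"
      show "w \<in> S"
      proof (cases "w = 0")
        case True thus ?thesis using S0 by simp
      next
        case False
        hence wV: "w \<in> V - {0}" using w by blast
        define i where "i = phi w"
        have iPh: "i \<in> Phi" unfolding i_def Phi_def using wV by blast
        have iI: "i \<in> II" using iPh PhII by blast
        have "ends1 i = {0, w}" unfolding ends1_def i_def using iPh phinv[OF wV] unfolding i_def by simp
        moreover have "(ends1 i, bl!i) \<in># M" using inM iI by blast
        ultimately show ?thesis using cl S0 by fastforce
      qed
    qed
    show "\<forall>se\<in>#M. fst se \<subseteq> S" using inM E1 blV VS by fastforce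
  qed
  obtain t where t: "chain 0 t 0" "mset (map norm t) = M" using euler_mset[OF c2 ev conn] by blast
  have IIne: "II \<noteq> {}"
  proof -
    have "1 \<in> V - {0}" using v2 unfolding V_def by simp
    thus ?thesis using phi(2) unfolding P_def by blast
  qed
  have tne: "t \<noteq> []"
  proof
    assume "t = []"
    hence "M = {#}" using t(2) by simp
    thus False using IIne inM by (metis empty_iff ex_in_conv set_mset_empty)
  qed
  have edges: "\<forall>ed\<in>set t. fst ed \<noteq> fst (snd ed) \<and> {fst ed, fst (snd ed)} \<subseteq> snd (snd ed)"
  proof
    fix ed assume "ed \<in> set t"
    hence "norm ed \<in># M" using t(2) by (metis image_eqI set_map set_mset_mset)
    then obtain i where iI: "i \<in> II" and e: "norm ed = (ends1 i, bl!i)" using inM by blast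
    hence "{fst ed, fst (snd ed)} = ends1 i" "snd (snd ed) = bl!i" unfolding norm_def by auto
    hence c: "card {fst ed, fst (snd ed)} = 2" and sb: "{fst ed, fst (snd ed)} \<subseteq> snd (snd ed)"
      using E1[OF iI] by auto
    have "fst ed \<noteq> fst (snd ed)" using c by (cases "fst ed = fst (snd ed)") auto
    thus "fst ed \<noteq> fst (snd ed) \<and> {fst ed, fst (snd ed)} \<subseteq> snd (snd ed)" using sb by blast
  qed
  define vs where "vs = map fst t"
  define es where "es = map (snd \<circ> snd) t"
  have cw: "closed_walk vs es" unfolding vs_def es_def using chain_cw[OF t(1) tne edges] .
  have mes: "mset es = mset bl"
  proof -
    have sn: "snd \<circ> norm = snd \<circ> (snd :: nat \<times> nat \<times> nat set \<Rightarrow> _)" by (auto simp: norm_def)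
    have "image_mset snd (mset (map norm t)) = mset (map (snd \<circ> norm) t)" by (simp add: multiset.map_comp)
    hence "mset es = image_mset snd (mset (map norm t))" unfolding es_def sn by simp
    also have "\<dots> = image_mset snd M" using t(2) by simp
    also have "\<dots> = mset (map (\<lambda>i. bl!i) [0..<length bl])" unfolding M_def by (simp only: mset_map[symmetric] map_map comp_def snd_conv)
    also have "\<dots> = mset bl" by (simp add: map_nth)
    finally show ?thesis .
  qed
  have span: "{..<v} \<subseteq> set vs"
  proof
    fix w assume "w \<in> {..<v}"
    hence w: "w \<in> V" unfolding V_def by simp
    show "w \<in> set vs"
    proof (cases "w = 0")
      case True
      have "t!0 \<in> set t" using tne by simp
      hence "fst (t!0) \<in> set (map fst t)" by simp
      thus ?thesis unfolding vs_def using chain_hd[OF t(1) tne] True by simp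
    next
      case False
      hence wV: "w \<in> V - {0}" using w by blast
      define i where "i = phi w"
      have iPh: "i \<in> Phi" unfolding i_def Phi_def using wV by blast
      have iI: "i \<in> II" using iPh PhII by blast
      have "ends1 i = {0, w}" unfolding ends1_def i_def using iPh phinv[OF wV] unfolding i_def by simp
      moreover have "(ends1 i, bl!i) \<in># mset (map norm t)" using inM iI t(2) by blast
      ultimately obtain ed where ed: "ed \<in> set t" "norm ed = ({0,w}, bl!i)" by auto
      hence "{fst ed, fst (snd ed)} = {0,w}" unfolding norm_def by simp
      hence "w = fst ed \<or> w = fst (snd ed)" by blast
      thus ?thesis unfolding vs_def using chain_snd_in[OF t(1) ed(1)] ed(1) by auto
    qed
  qed
  show ?thesis unfolding spanning_euler_tour_def euler_tour_def using cw mes span by blast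
qed

end

theorem corollary1p6:
  fixes K :: "nat set" and lam :: nat
  assumes "finite K" and "K \<noteq> {}" and "Min K \<ge> 3" and "lam \<ge> Max K"
  shows "\<exists>N. \<forall>v Bs. v \<ge> N \<longrightarrow> is_PBD v K lam Bs \<longrightarrow>
           (\<exists>vs es. spanning_euler_tour {..<v} Bs vs es)"
proof -
  define kk where "kk = Max K"
  obtain a where aK: "a \<in> K" using assms(2) by blast
  have "Min K \<le> a" "a \<le> Max K" using assms(1) aK by auto
  hence k3: "kk \<ge> 3" using assms(3) unfolding kk_def by linarith
  show ?thesis
  proof (intro exI[of _ "4*kk^4+3"] allI impI)
    fix v Bs assume vb: "4*kk^4+3 \<le> v" and pbd: "is_PBD v K lam Bs"
    obtain bl where bl: "mset bl = Bs" using ex_mset by blast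
    have blk: "bl!i \<subseteq> {..<v} \<and> 3 \<le> card (bl!i) \<and> card (bl!i) \<le> kk" if "i < length bl" for i
    proof -
      have "bl!i \<in># Bs" using that bl by (metis nth_mem set_mset_mset)
      hence "bl!i \<subseteq> {..<v}" "card (bl!i) \<in> K" using pbd unfolding is_PBD_def by auto
      moreover hence "Min K \<le> card (bl!i)" "card (bl!i) \<le> Max K" using assms(1) by auto
      ultimately show ?thesis using assms(3) unfolding kk_def by auto
    qed
    have pair: "card {i. i < length bl \<and> {x,y} \<subseteq> bl!i} = lam" if "x < v" "y < v" "x \<noteq> y" for x y
    proof -
      have "size (filter_mset (\<lambda>B. {x, y} \<subseteq> B) Bs) = lam" using pbd that unfolding is_PBD_def by blast
      moreover have "size (filter_mset (\<lambda>B. {x, y} \<subseteq> B) Bs) = card {i. i < length bl \<and> {x,y} \<subseteq> bl!i}"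
        unfolding bl[symmetric] by (simp only: mset_filter[symmetric] size_mset length_filter_conv_card)
      ultimately show ?thesis by simp
    qed
    interpret c: ctx v kk lam bl
      using k3 assms(4) blk pair vb unfolding kk_def by unfold_locales auto
    show "\<exists>vs es. spanning_euler_tour {..<v} Bs vs es" using c.tour bl by simp
  qed
qed

end
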